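(* Let $J\subsetneq I$ be nonzero square free monomial ideals of $S=K[x_1,\ldots,x_n]$, where $I$ is generated by $r>0$ variables and $J$ is generated by square free monomials of degrees $\geq 2$. Let $s=\rho_2(I)-\rho_2(J)$ be the number of square free monomials of degree $2$ in $I\setminus J$. If $r>s$, then $\operatorname{depth}_S I/J=1$.
   Context: $S=K[x_1,\ldots,x_n]$ is the polynomial ring over a field $K$; for a monomial ideal $L$, $\rho_k(L)$ denotes the number of square free monomials of degree $k$ belonging to $L$; depth is taken over $S$. *)

theory Defs
  imports Main "HOL-Library.Poly_Mapping"
begin

(* Polynomials over a field 'a in variables indexed by nat: a monomial (power product)
is a finitely supported map nat \<Rightarrow>\<^sub>0 nat (exponent vector), a polynomial is a finitely
supported map from monomials to coefficients. The ring S = K[x_0,...,x_(n-1)] is the set of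
polynomials all of whose monomials only involve the variables 0,...,n-1. *)

type_synonym 'a mpoly = "(nat \<Rightarrow>\<^sub>0 nat) \<Rightarrow>\<^sub>0 'a"

definition polyring :: "nat \<Rightarrow> ('a::field) mpoly set" where
  "polyring n = {p :: 'a mpoly. \<forall>m\<in>Poly_Mapping.keys p. Poly_Mapping.keys m \<subseteq> {..<n}}"

definition mon :: "(nat \<Rightarrow>\<^sub>0 nat) \<Rightarrow> ('a::field) mpoly" where
  "mon a = Poly_Mapping.single a 1"

definition var :: "nat \<Rightarrow> ('a::field) mpoly" where
  "var i = mon (Poly_Mapping.single i 1)"

definition mdeg :: "(nat \<Rightarrow>\<^sub>0 nat) \<Rightarrow> nat" where
  "mdeg a = (\<Sum>i\<in>Poly_Mapping.keys a. Poly_Mapping.lookup a i)"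

definition sqfree_mon :: "nat \<Rightarrow> (nat \<Rightarrow>\<^sub>0 nat) \<Rightarrow> bool" where
  "sqfree_mon n a \<longleftrightarrow> Poly_Mapping.keys a \<subseteq> {..<n} \<and> (\<forall>i. Poly_Mapping.lookup a i \<le> 1)"

definition is_ideal :: "nat \<Rightarrow> ('a::field) mpoly set \<Rightarrow> bool" where
  "is_ideal n L \<longleftrightarrow> L \<subseteq> polyring n \<and> 0 \<in> L \<and> (\<forall>p\<in>L. \<forall>q\<in>L. p + q \<in> L)
     \<and> (\<forall>p\<in>L. \<forall>q\<in>polyring n. q * p \<in> L)"

definition ideal_gen :: "nat \<Rightarrow> ('a::field) mpoly set \<Rightarrow> 'a mpoly set" where
  "ideal_gen n G = \<Inter>{L. is_ideal n L \<and> G \<subseteq> L}"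

definition sqfree_monomial_ideal :: "nat \<Rightarrow> ('a::field) mpoly set \<Rightarrow> bool" where
  "sqfree_monomial_ideal n L \<longleftrightarrow> (\<exists>A. (\<forall>a\<in>A. sqfree_mon n a) \<and> L = ideal_gen n (mon ` A))"

definition rho :: "nat \<Rightarrow> nat \<Rightarrow> ('a::field) mpoly set \<Rightarrow> nat" where
  "rho n k L = card {a. sqfree_mon n a \<and> mdeg a = k \<and> mon a \<in> L}"

definition max_ideal :: "nat \<Rightarrow> ('a::field) mpoly set" where
  "max_ideal n = {p \<in> polyring n. Poly_Mapping.lookup p 0 = 0}"

(* For S-modules J \<subseteq> I \<subseteq> S, the preimage in I of (f_1,...,f_k)(I/J), i.e. J + (f_1,...,f_k) I. *)
definition sub_seq :: "('a::field) mpoly set \<Rightarrow> 'a mpoly set \<Rightarrow> 'a mpoly list \<Rightarrow> 'a mpoly set" where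
  "sub_seq I J fs = {j + (\<Sum>i<length fs. fs ! i * u i) | j u. j \<in> J \<and> (\<forall>i. u i \<in> I)}"

(* f_1,...,f_k in m is an (I/J)-regular sequence: each f_(i+1) is a non-zero-divisor on
(I/J)/(f_1..f_i)(I/J), and (I/J)/(f_1..f_k)(I/J) \<noteq> 0. *)
definition regular_seq :: "nat \<Rightarrow> ('a::field) mpoly set \<Rightarrow> 'a mpoly set \<Rightarrow> 'a mpoly list \<Rightarrow> bool" where
  "regular_seq n I J fs \<longleftrightarrow> set fs \<subseteq> max_ideal n
     \<and> (\<forall>i<length fs. \<forall>u\<in>I. fs ! i * u \<in> sub_seq I J (take i fs) \<longrightarrow> u \<in> sub_seq I J (take i fs))
     \<and> sub_seq I J fs \<noteq> I"

definition depth_quot :: "nat \<Rightarrow> ('a::field) mpoly set \<Rightarrow> 'a mpoly set \<Rightarrow> nat" where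
  "depth_quot n I J = (GREATEST k. \<exists>fs. length fs = k \<and> regular_seq n I J fs)"

end

theory Submission
  imports Defs
begin


abbreviation xv :: "nat \<Rightarrow> (nat \<Rightarrow>\<^sub>0 nat)" where "xv i \<equiv> Poly_Mapping.single i 1"

definition mle :: "(nat \<Rightarrow>\<^sub>0 nat) \<Rightarrow> (nat \<Rightarrow>\<^sub>0 nat) \<Rightarrow> bool" where
  "mle b m \<longleftrightarrow> (\<forall>j. Poly_Mapping.lookup b j \<le> Poly_Mapping.lookup m j)"

lemma mle_add: "mle b (b + c)"
  by (simp add: mle_def lookup_add)

lemma mle_ex: assumes "mle b m" shows "m = b + (m - b)"
  using assms by (auto simp: mle_def poly_mapping_eq_iff lookup_add lookup_minus fun_eq_iff)

lemma mle_trans: "mle a b \<Longrightarrow> mle b c \<Longrightarrow> mle a c"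
  unfolding mle_def using order_trans by blast

lemma mle_addR: "mle a b \<Longrightarrow> mle a (b + c)"
  unfolding mle_def by (simp add: lookup_add trans_le_add1)

lemma mle_addL: "mle a b \<Longrightarrow> mle a (c + b)"
  unfolding mle_def by (simp add: lookup_add trans_le_add2)

lemma keys_add_nat: "Poly_Mapping.keys (a + b :: nat \<Rightarrow>\<^sub>0 nat) = Poly_Mapping.keys a \<union> Poly_Mapping.keys b"
  by (auto simp: in_keys_iff lookup_add)

lemma poly_sum_rep: "p = (\<Sum>q\<in>Poly_Mapping.keys p. Poly_Mapping.single q (Poly_Mapping.lookup p q))"
  by (rule poly_mapping_eqI) (simp add: lookup_sum lookup_single when_def in_keys_iff)

lemma lookup_single_mult: 
  "Poly_Mapping.lookup (Poly_Mapping.single k c * p) (k + l) = (c::'b::comm_semiring_1) * Poly_Mapping.lookup p (l::'a::cancel_comm_monoid_add)"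
proof -
  have "Poly_Mapping.lookup (Poly_Mapping.single k c * p) (k + l) =
     (\<Sum>l'. (c when k = l') * (\<Sum>q. Poly_Mapping.lookup p q when k + l = l' + q))"
    by (simp add: lookup_mult lookup_single)
  also have "\<dots> = c * (\<Sum>q. Poly_Mapping.lookup p q when k + l = k + q)"
    by (simp add: when_mult)
  also have "\<dots> = c * Poly_Mapping.lookup p l"
    by (simp add: eq_commute)
  finally show ?thesis .
qed


lemma polyring_add: "p \<in> polyring n \<Longrightarrow> q \<in> polyring n \<Longrightarrow> p + q \<in> polyring n"
  unfolding polyring_def using keys_add[of p q] by blast

lemma polyring_uminus: "p \<in> polyring n \<Longrightarrow> - p \<in> polyring n"
  unfolding polyring_def by simp

lemma polyring_diff: "p \<in> polyring n \<Longrightarrow> q \<in> polyring n \<Longrightarrow> p - q \<in> polyring n"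
  unfolding polyring_def using keys_diff[of p q] by blast

lemma polyring_mult: "p \<in> polyring n \<Longrightarrow> q \<in> polyring n \<Longrightarrow> p * q \<in> polyring n"
proof -
  have "Poly_Mapping.keys m \<subseteq> {..<n}" if m: "m \<in> Poly_Mapping.keys (p * q)" and p: "p \<in> polyring n" and q: "q \<in> polyring n" for m
  proof -
    obtain a b where "m = a + b" "a \<in> Poly_Mapping.keys p" "b \<in> Poly_Mapping.keys q" using keys_mult[of p q] m by blast
    then show ?thesis using p q unfolding polyring_def by (simp add: keys_add_nat)
  qed
  then show "p \<in> polyring n \<Longrightarrow> q \<in> polyring n \<Longrightarrow> p * q \<in> polyring n"
    unfolding polyring_def[of n] by blast
qed

lemma polyring_single: "Poly_Mapping.keys m \<subseteq> {..<n} \<Longrightarrow> Poly_Mapping.single m c \<in> polyring n"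
  unfolding polyring_def by simp

lemma polyring_0: "0 \<in> polyring n"
  unfolding polyring_def by simp

lemma polyring_sum: "(\<And>i. i \<in> X \<Longrightarrow> f i \<in> polyring n) \<Longrightarrow> sum f X \<in> polyring n"
  by (induction X rule: infinite_finite_induct) (auto simp: polyring_0 polyring_add)

lemma is_ideal_sum: assumes "is_ideal n L" shows "(\<And>i. i \<in> X \<Longrightarrow> f i \<in> L) \<Longrightarrow> sum f X \<in> L"
  using assms by (induction X rule: infinite_finite_induct) (auto simp: is_ideal_def)

definition mset_ideal :: "nat \<Rightarrow> (nat \<Rightarrow>\<^sub>0 nat) set \<Rightarrow> ('a::field) mpoly set" where
  "mset_ideal n B = {p \<in> polyring n. \<forall>m\<in>Poly_Mapping.keys p. \<exists>b\<in>B. mle b m}"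

lemma mset_ideal_is_ideal: "is_ideal n (mset_ideal n B :: 'a::field mpoly set)"
  unfolding is_ideal_def mset_ideal_def
proof (intro conjI ballI)
  show "0 \<in> {p \<in> polyring n. \<forall>m\<in>Poly_Mapping.keys p. \<exists>b\<in>B. mle b m}" by (simp add: polyring_0)
next
  fix p q :: "'a mpoly" assume p: "p \<in> {p \<in> polyring n. \<forall>m\<in>Poly_Mapping.keys p. \<exists>b\<in>B. mle b m}"
    and q: "q \<in> {p \<in> polyring n. \<forall>m\<in>Poly_Mapping.keys p. \<exists>b\<in>B. mle b m}"
  then show "p + q \<in> {p \<in> polyring n. \<forall>m\<in>Poly_Mapping.keys p. \<exists>b\<in>B. mle b m}"
    using keys_add[of p q] polyring_add by blast
next
  fix p q :: "'a mpoly" assume p: "p \<in> {p \<in> polyring n. \<forall>m\<in>Poly_Mapping.keys p. \<exists>b\<in>B. mle b m}"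
    and q: "q \<in> polyring n"
  have "\<exists>b\<in>B. mle b m" if hm: "m \<in> Poly_Mapping.keys (q * p)" for m
  proof -
    obtain a c where "m = a + c" "c \<in> Poly_Mapping.keys p" using keys_mult[of q p] hm by blast
    then show ?thesis using p mle_addL by blast
  qed
  then show "q * p \<in> {p \<in> polyring n. \<forall>m\<in>Poly_Mapping.keys p. \<exists>b\<in>B. mle b m}"
    using p q polyring_mult by blast
qed blast

lemma ideal_gen_mon:
  assumes "\<forall>b\<in>B. Poly_Mapping.keys b \<subseteq> {..<n}"
  shows "ideal_gen n (mon ` B :: 'a::field mpoly set) = mset_ideal n B"
proof
  have "mon ` B \<subseteq> (mset_ideal n B :: 'a mpoly set)"
  proof
    fix p assume "p \<in> (mon ` B :: 'a mpoly set)"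
    then obtain b where b: "b \<in> B" "p = mon b" by auto
    have "mle b b" by (simp add: mle_def)
    then show "p \<in> mset_ideal n B" using b assms unfolding mset_ideal_def mon_def by (auto intro: polyring_single)
  qed
  then show "ideal_gen n (mon ` B) \<subseteq> (mset_ideal n B :: 'a mpoly set)"
    unfolding ideal_gen_def using mset_ideal_is_ideal[of n B] by blast
next
  show "mset_ideal n B \<subseteq> ideal_gen n (mon ` B :: 'a mpoly set)"
    unfolding ideal_gen_def
  proof (intro subsetI InterI, clarify)
    fix p :: "'a mpoly" and L :: "'a mpoly set" assume p: "p \<in> mset_ideal n B" and L: "is_ideal n L" "mon ` B \<subseteq> L"
    have "Poly_Mapping.single q (Poly_Mapping.lookup p q) \<in> L" if q: "q \<in> Poly_Mapping.keys p" for q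
    proof -
      obtain b where b: "b \<in> B" "mle b q" using p q unfolding mset_ideal_def by blast
      have qn: "Poly_Mapping.keys q \<subseteq> {..<n}" using p q unfolding mset_ideal_def polyring_def by blast
      define c where "c = q - b"
      have qc: "q = c + b" using mle_ex[OF b(2)] unfolding c_def by (metis add.commute)
      have "Poly_Mapping.keys c \<subseteq> Poly_Mapping.keys q" by (simp add: qc keys_add_nat)
      then have "Poly_Mapping.keys c \<subseteq> {..<n}" using qn by (rule order_trans)
      then have cP: "Poly_Mapping.single c (Poly_Mapping.lookup p q) \<in> polyring n"
        by (rule polyring_single)
      have "Poly_Mapping.single q (Poly_Mapping.lookup p q) = Poly_Mapping.single c (Poly_Mapping.lookup p q) * mon b"
        unfolding mon_def mult_single by (simp add: qc)
      also have "\<dots> \<in> L" using L b cP unfolding is_ideal_def by blast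
      finally show ?thesis .
    qed
    then have "(\<Sum>q\<in>Poly_Mapping.keys p. Poly_Mapping.single q (Poly_Mapping.lookup p q)) \<in> L"
      by (rule is_ideal_sum[OF L(1)])
    then show "p \<in> L" using poly_sum_rep[of p] by metis
  qed
qed



lemma mset_ideal_add: "p \<in> mset_ideal n B \<Longrightarrow> q \<in> mset_ideal n B \<Longrightarrow> p + q \<in> mset_ideal n B"
  using mset_ideal_is_ideal[of n B] unfolding is_ideal_def by blast

lemma mset_ideal_multL: "p \<in> mset_ideal n B \<Longrightarrow> q \<in> polyring n \<Longrightarrow> q * p \<in> mset_ideal n B"
  using mset_ideal_is_ideal[of n B] unfolding is_ideal_def by blast

lemma mset_ideal_multR: "p \<in> mset_ideal n B \<Longrightarrow> q \<in> polyring n \<Longrightarrow> p * q \<in> mset_ideal n B"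
  using mset_ideal_multL[of p n B q] by (simp add: mult.commute)

lemma mset_ideal_polyring: "p \<in> mset_ideal n B \<Longrightarrow> p \<in> polyring n"
  unfolding mset_ideal_def by blast

lemma polyring_1: "1 \<in> polyring n"
  unfolding polyring_def by simp

lemma mset_ideal_uminus: "p \<in> mset_ideal n B \<Longrightarrow> - p \<in> mset_ideal n B"
  using mset_ideal_multL[of p n B "-1"] polyring_uminus[OF polyring_1] by (metis mult_minus1)

lemma mset_ideal_diff: "p \<in> mset_ideal n B \<Longrightarrow> q \<in> mset_ideal n B \<Longrightarrow> p - q \<in> mset_ideal n B"
  using mset_ideal_add[of p n B "-q"] mset_ideal_uminus[of q n B] by (metis diff_conv_add_uminus)

lemma mle_xv: "mle (xv i) m \<longleftrightarrow> i \<in> Poly_Mapping.keys m"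
  unfolding mle_def by (auto simp: lookup_single in_keys_iff when_def)

lemma I_char: "mset_ideal n (xv ` V) = {p \<in> polyring n. \<forall>m\<in>Poly_Mapping.keys p. Poly_Mapping.keys m \<inter> V \<noteq> {}}"
  unfolding mset_ideal_def using mle_xv by blast

lemma I_nz: "p \<in> mset_ideal n (xv ` V) \<Longrightarrow> 0 \<notin> Poly_Mapping.keys p"
  unfolding I_char by auto

lemma mle_edge:
  assumes "i \<in> Poly_Mapping.keys a" "k \<in> Poly_Mapping.keys b" "i \<noteq> k"
  shows "mle (xv i + xv k) (a + b)"
  unfolding mle_def
proof
  fix j
  show "Poly_Mapping.lookup (xv i + xv k) j \<le> Poly_Mapping.lookup (a + b) j"
    using assms by (cases "j = i"; cases "j = k") (auto simp: lookup_add lookup_single in_keys_iff when_def)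
qed

definition rC :: "nat set \<Rightarrow> ('a::field) mpoly \<Rightarrow> 'a mpoly" where
  "rC C p = Poly_Mapping.mapp (\<lambda>m c. if Poly_Mapping.keys m \<subseteq> C then c else 0) p"

lemma lookup_rC: "Poly_Mapping.lookup (rC C p) m = (if Poly_Mapping.keys m \<subseteq> C then Poly_Mapping.lookup p m else 0)"
  unfolding rC_def by (auto simp: lookup_mapp when_def in_keys_iff)

lemma keys_rC: "m \<in> Poly_Mapping.keys (rC C p) \<longleftrightarrow> m \<in> Poly_Mapping.keys p \<and> Poly_Mapping.keys m \<subseteq> C"
  by (auto simp: in_keys_iff lookup_rC)

lemma keys_rC_diff: "m \<in> Poly_Mapping.keys (p - rC C p) \<longleftrightarrow> m \<in> Poly_Mapping.keys p \<and> \<not> Poly_Mapping.keys m \<subseteq> C"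
  by (auto simp: in_keys_iff lookup_rC lookup_minus)

lemma cross:
  assumes p: "p \<in> polyring n" and q: "q \<in> polyring n"
    and hp: "\<forall>m\<in>Poly_Mapping.keys p. Poly_Mapping.keys m \<inter> C \<noteq> {}"
    and hq: "\<forall>m\<in>Poly_Mapping.keys q. \<not> Poly_Mapping.keys m \<subseteq> C"
    and hC: "\<forall>i\<in>C. \<forall>k<n. k \<notin> C \<longrightarrow> (\<exists>b\<in>A. mle b (xv i + xv k))"
  shows "p * q \<in> mset_ideal n A"
proof -
  have "\<exists>b\<in>A. mle b m" if hm: "m \<in> Poly_Mapping.keys (p * q)" for m
  proof -
    obtain a c where mac: "m = a + c" "a \<in> Poly_Mapping.keys p" "c \<in> Poly_Mapping.keys q"
      using keys_mult[of p q] hm by blast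
    obtain i where i: "i \<in> Poly_Mapping.keys a" "i \<in> C" using hp mac by blast
    obtain k where k: "k \<in> Poly_Mapping.keys c" "k \<notin> C" using hq mac by blast
    have "k < n" using q mac k unfolding polyring_def by blast
    then obtain b where "b \<in> A" "mle b (xv i + xv k)" using hC i k by blast
    moreover have "mle (xv i + xv k) m" unfolding mac(1) using i k by (intro mle_edge) auto
    ultimately show ?thesis using mle_trans by blast
  qed
  then show ?thesis unfolding mset_ideal_def using polyring_mult[OF p q] by blast
qed

lemma rC_polyring: "p \<in> polyring n \<Longrightarrow> rC C p \<in> polyring n"
  unfolding polyring_def using keys_rC by blast

lemma rC_diff_polyring: "p \<in> polyring n \<Longrightarrow> p - rC C p \<in> polyring n"
  using polyring_diff rC_polyring by blast

lemma max_ideal_nz: "p \<in> max_ideal n \<Longrightarrow> 0 \<notin> Poly_Mapping.keys p"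
  unfolding max_ideal_def by (simp add: in_keys_iff)

lemma rC_I:
  assumes "p \<in> max_ideal n" "C \<subseteq> V"
  shows "rC C p \<in> mset_ideal n (xv ` V)"
proof -
  have "p \<in> polyring n" using assms unfolding max_ideal_def by blast
  moreover have "Poly_Mapping.keys m \<inter> V \<noteq> {}" if "m \<in> Poly_Mapping.keys (rC C p)" for m
  proof -
    have "m \<noteq> 0" using that max_ideal_nz[OF assms(1)] keys_rC by blast
    then have "Poly_Mapping.keys m \<noteq> {}" by simp
    then show ?thesis using that keys_rC assms(2) by blast
  qed
  ultimately show ?thesis unfolding I_char using rC_polyring by blast
qed

lemma rC_Ckeys:
  assumes "p \<in> max_ideal n"
  shows "\<forall>m\<in>Poly_Mapping.keys (rC C p). Poly_Mapping.keys m \<inter> C \<noteq> {}"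
proof
  fix m assume m: "m \<in> Poly_Mapping.keys (rC C p)"
  have "m \<noteq> 0" using m max_ideal_nz[OF assms(1)] keys_rC by blast
  then have "Poly_Mapping.keys m \<noteq> {}" by simp
  then show "Poly_Mapping.keys m \<inter> C \<noteq> {}" using m keys_rC by blast
qed


lemma sub_seq_Nil: "z \<in> I \<Longrightarrow> sub_seq I J [] = J"
  unfolding sub_seq_def by (auto intro!: exI[of _ "\<lambda>_. z"])

lemma sub_seq_1: "sub_seq I J [f] = {j + f * w | j w. j \<in> J \<and> w \<in> I}"
proof
  show "sub_seq I J [f] \<subseteq> {j + f * w | j w. j \<in> J \<and> w \<in> I}"
    unfolding sub_seq_def by force
  show "{j + f * w | j w. j \<in> J \<and> w \<in> I} \<subseteq> sub_seq I J [f]"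
  proof
    fix x assume "x \<in> {j + f * w | j w. j \<in> J \<and> w \<in> I}"
    then obtain j w where "x = j + f * w" "j \<in> J" "w \<in> I" by blast
    then show "x \<in> sub_seq I J [f]" unfolding sub_seq_def
      by (intro CollectI exI[of _ j] exI[of _ "\<lambda>_. w"]) simp
  qed
qed

lemma no_two:
  fixes f1 f2 :: "'a::field mpoly"
  assumes nA: "\<forall>b\<in>A. \<forall>i. \<not> mle b (xv i)"
    and C: "C \<noteq> {}" "C \<subseteq> V" "V \<subseteq> {..<n}"
    and hC: "\<forall>i\<in>C. \<forall>k<n. k \<notin> C \<longrightarrow> (\<exists>b\<in>A. mle b (xv i + xv k))"
    and f: "f1 \<in> max_ideal n" "f2 \<in> max_ideal n"
    and reg: "\<forall>u\<in>mset_ideal n (xv ` V). f1 * u \<in> mset_ideal n A \<longrightarrow> u \<in> mset_ideal n A"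
  shows "\<exists>u\<in>mset_ideal n (xv ` V). f2 * u \<in> sub_seq (mset_ideal n (xv ` V)) (mset_ideal n A) [f1]
            \<and> u \<notin> sub_seq (mset_ideal n (xv ` V)) (mset_ideal n A) [f1]"
proof -
  define I where "I = (mset_ideal n (xv ` V) :: 'a mpoly set)"
  define J where "J = (mset_ideal n A :: 'a mpoly set)"
  define u where "u = rC C f1"
  define v where "v = rC C f2"
  define a where "a = f1 - u"
  define b where "b = f2 - v"
  have f1P: "f1 \<in> polyring n" and f2P: "f2 \<in> polyring n" using f unfolding max_ideal_def by auto
  have uI: "u \<in> I" and vI: "v \<in> I" unfolding u_def v_def I_def using rC_I f C(2) by blast+
  have uP: "u \<in> polyring n" and vP: "v \<in> polyring n" using uI vI unfolding I_def by (auto intro: mset_ideal_polyring)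
  have aP: "a \<in> polyring n" and bP: "b \<in> polyring n"
    unfolding a_def b_def u_def v_def using f1P f2P rC_diff_polyring by blast+
  have ub: "u * b \<in> J" unfolding J_def
    by (rule cross[OF uP bP _ _ hC]) (auto simp: u_def b_def v_def rC_Ckeys[OF f(1)] keys_rC_diff)
  have va: "v * a \<in> J" unfolding J_def
    by (rule cross[OF vP aP _ _ hC]) (auto simp: a_def u_def v_def rC_Ckeys[OF f(2)] keys_rC_diff)
  have eq: "f2 * u - f1 * v = u * b - v * a" unfolding a_def b_def by (simp add: algebra_simps)
  have "f2 * u - f1 * v \<in> J" unfolding eq J_def using ub va J_def mset_ideal_diff by blast
  then have "f2 * u \<in> sub_seq I J [f1]" unfolding sub_seq_1 using vI
    by (intro CollectI exI[of _ "f2 * u - f1 * v"] exI[of _ v]) auto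
  moreover have "u \<notin> sub_seq I J [f1]"
  proof
    assume "u \<in> sub_seq I J [f1]"
    then obtain j w where jw: "u = j + f1 * w" "j \<in> J" "w \<in> I" unfolding sub_seq_1 by blast
    obtain i where i: "i \<in> C" using C(1) by blast
    have "i < n" using i C by blast
    define X where "X = (Poly_Mapping.single (xv i) 1 :: 'a mpoly)"
    have XP: "X \<in> polyring n" unfolding X_def using \<open>i < n\<close> by (intro polyring_single) auto
    have XI: "X \<in> I" unfolding I_def I_char using XP i C by (auto simp: X_def)
    have wP: "w \<in> polyring n" using jw unfolding I_def by (auto intro: mset_ideal_polyring)
    have Xa: "X * a \<in> J" unfolding J_def
      by (rule cross[OF XP aP _ _ hC]) (auto simp: X_def i a_def u_def keys_rC_diff)
    have Xj: "X * j \<in> J" using jw(2) XP unfolding J_def by (rule mset_ideal_multL)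
    have eq2: "f1 * (X * w - X) = - (X * a) - X * j"
      unfolding a_def using jw(1) by (simp add: algebra_simps)
    have "f1 * (X * w - X) \<in> J" unfolding eq2 using Xa Xj J_def mset_ideal_diff mset_ideal_uminus by metis
    moreover have XwI: "X * w - X \<in> I" unfolding I_def
      using XI jw(3) wP XP I_def mset_ideal_diff mset_ideal_multL by metis
    ultimately have XwJ: "X * w - X \<in> J" using reg unfolding I_def J_def by blast
    have "Poly_Mapping.lookup (X * w) (xv i + 0) = Poly_Mapping.lookup w 0"
      unfolding X_def by (subst lookup_single_mult) simp
    moreover have "Poly_Mapping.lookup w 0 = 0" using I_nz jw(3) unfolding I_def by (simp add: in_keys_iff)
    ultimately have "Poly_Mapping.lookup (X * w - X) (xv i) \<noteq> 0"
      by (simp add: lookup_minus X_def)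
    then have "xv i \<in> Poly_Mapping.keys (X * w - X)" by (simp add: in_keys_iff)
    then obtain bb where "bb \<in> A" "mle bb (xv i)" using XwJ unfolding J_def mset_ideal_def by blast
    then show False using nA by blast
  qed
  ultimately show ?thesis using uI unfolding I_def J_def by blast
qed



definition rA :: "(nat \<Rightarrow>\<^sub>0 nat) set \<Rightarrow> ('a::field) mpoly \<Rightarrow> 'a mpoly" where
  "rA A p = Poly_Mapping.mapp (\<lambda>m c. if \<exists>b\<in>A. mle b m then c else 0) p"

lemma lookup_rA: "Poly_Mapping.lookup (rA A p) m = (if \<exists>b\<in>A. mle b m then Poly_Mapping.lookup p m else 0)"
  unfolding rA_def by (auto simp: lookup_mapp when_def in_keys_iff)

lemma keys_rA: "m \<in> Poly_Mapping.keys (rA A p) \<longleftrightarrow> m \<in> Poly_Mapping.keys p \<and> (\<exists>b\<in>A. mle b m)"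
  by (auto simp: in_keys_iff lookup_rA)

lemma keys_rA_diff: "m \<in> Poly_Mapping.keys (p - rA A p) \<longleftrightarrow> m \<in> Poly_Mapping.keys p \<and> \<not> (\<exists>b\<in>A. mle b m)"
  by (auto simp: in_keys_iff lookup_rA lookup_minus)

lemma lex_less: 
  assumes "Poly_Mapping.lookup m i < Poly_Mapping.lookup c i" "\<And>k. k < i \<Longrightarrow> Poly_Mapping.lookup m k = Poly_Mapping.lookup c k"
  shows "m < (c :: nat \<Rightarrow>\<^sub>0 nat)"
  using assms by transfer (auto simp: less_fun_def)

lemma lookup_X_mult_zero:
  fixes u :: "'a::field mpoly"
  assumes m: "m = Max (Poly_Mapping.keys u)" "u \<noteq> 0"
    and i: "i = Min (Poly_Mapping.keys m)" "m \<noteq> 0" and k: "k \<noteq> i"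
  shows "Poly_Mapping.lookup (Poly_Mapping.single (xv k) 1 * u) (m + xv i) = 0"
proof (rule ccontr)
  assume "Poly_Mapping.lookup (Poly_Mapping.single (xv k) 1 * u) (m + xv i) \<noteq> 0"
  then have "m + xv i \<in> Poly_Mapping.keys (Poly_Mapping.single (xv k) 1 * u)" by (simp add: in_keys_iff)
  then obtain c where c: "m + xv i = xv k + c" "c \<in> Poly_Mapping.keys u"
    using keys_mult[of "Poly_Mapping.single (xv k) (1::'a)" u] by auto
  have lk: "\<And>j. Poly_Mapping.lookup m j + Poly_Mapping.lookup (xv i) j = Poly_Mapping.lookup (xv k) j + Poly_Mapping.lookup c j"
    using c(1) by (metis lookup_add)
  have "Poly_Mapping.lookup m k \<ge> 1" using lk[of k] k by (simp add: lookup_single)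
  then have "k \<in> Poly_Mapping.keys m" by (simp add: in_keys_iff)
  then have "i \<le> k" using i by simp
  then have ik: "i < k" using k by simp
  have "m < c"
  proof (rule lex_less[of _ i])
    show "Poly_Mapping.lookup m i < Poly_Mapping.lookup c i" using lk[of i] k by (simp add: lookup_single)
    show "Poly_Mapping.lookup m j = Poly_Mapping.lookup c j" if "j < i" for j
      using lk[of j] that ik by (simp add: lookup_single)
  qed
  moreover have "c \<le> m" using c(2) m by simp
  ultimately show False by simp
qed


definition fsum :: "nat \<Rightarrow> 'a::field mpoly" where
  "fsum n = (\<Sum>k<n. Poly_Mapping.single (xv k) 1)"

lemma xv_keys: "Poly_Mapping.keys (xv i) = {i}" by simp

lemma fsum_polyring: "fsum n \<in> polyring n"
  unfolding fsum_def by (intro polyring_sum polyring_single) auto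

lemma xv_nz: "xv i \<noteq> 0"
  by (metis lookup_single_eq lookup_zero one_neq_zero)

lemma fsum_max: "fsum n \<in> max_ideal n"
  unfolding max_ideal_def using fsum_polyring xv_nz
  by (simp add: fsum_def lookup_sum lookup_single when_def)

lemma fsum_regular:
  fixes u :: "'a::field mpoly"
  assumes sq: "\<forall>b\<in>A. \<forall>j. Poly_Mapping.lookup b j \<le> 1"
    and uI: "u \<in> mset_ideal n (xv ` V)" and fu: "fsum n * u \<in> mset_ideal n A"
  shows "u \<in> mset_ideal n A"
proof (rule ccontr)
  assume nu: "u \<notin> mset_ideal n A"
  have uP: "u \<in> polyring n" using uI by (rule mset_ideal_polyring)
  have rP: "rA A u \<in> polyring n" using uP unfolding polyring_def using keys_rA by blast
  have rJ: "rA A u \<in> mset_ideal n A" using rP unfolding mset_ideal_def using keys_rA by blast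
  define u' where "u' = u - rA A u"
  have u'P: "u' \<in> polyring n" unfolding u'_def using uP rP by (rule polyring_diff)
  have u'nz: "u' \<noteq> 0" using nu rJ unfolding u'_def by auto
  have fu': "fsum n * u' \<in> mset_ideal n A" unfolding u'_def right_diff_distrib
    using fu rJ fsum_polyring mset_ideal_multL mset_ideal_diff by blast
  define m where "m = Max (Poly_Mapping.keys u')"
  have mk: "m \<in> Poly_Mapping.keys u'" unfolding m_def using u'nz by (intro Max_in) auto
  have m0: "m \<noteq> 0" using mk I_nz[OF uI] unfolding u'_def keys_rA_diff by blast
  define i where "i = Min (Poly_Mapping.keys m)"
  have ik: "i \<in> Poly_Mapping.keys m" unfolding i_def using m0 by (intro Min_in) auto
  have "i < n" using ik mk u'P unfolding polyring_def by blast
  have "Poly_Mapping.lookup (fsum n * u') (m + xv i) =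
        (\<Sum>k<n. Poly_Mapping.lookup (Poly_Mapping.single (xv k) 1 * u') (m + xv i))"
    unfolding fsum_def sum_distrib_right lookup_sum ..
  also have "\<dots> = Poly_Mapping.lookup (Poly_Mapping.single (xv i) 1 * u') (m + xv i)"
    using \<open>i < n\<close> lookup_X_mult_zero[OF m_def u'nz i_def m0]
    by (subst sum.remove[of _ i]) (auto intro!: sum.neutral)
  also have "\<dots> = Poly_Mapping.lookup u' m"
    using lookup_single_mult[of "xv i" "1::'a" u' m] by (simp add: add.commute)
  also have "\<dots> \<noteq> 0" using mk by (simp add: in_keys_iff)
  finally have "m + xv i \<in> Poly_Mapping.keys (fsum n * u')" by (simp add: in_keys_iff)
  then obtain b where b: "b \<in> A" "mle b (m + xv i)" using fu' unfolding mset_ideal_def by blast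
  have "mle b m" unfolding mle_def
  proof
    fix j
    show "Poly_Mapping.lookup b j \<le> Poly_Mapping.lookup m j"
    proof (cases "j = i")
      case True
      then show ?thesis using sq b(1) ik by (metis in_keys_iff le_trans less_one not_le)
    next
      case False
      then show ?thesis using b(2) unfolding mle_def by (metis lookup_add lookup_single_not_eq add_0_right)
    qed
  qed
  then show False using mk b(1) unfolding u'_def keys_rA_diff by blast
qed



lemma count_lemma:
  fixes P :: "'b set" and ks :: "'b \<Rightarrow> nat set"
  assumes fP: "finite P" and fV: "finite V"
    and H: "\<And>W. W \<subseteq> V \<Longrightarrow> W \<noteq> {} \<Longrightarrow> \<exists>i\<in>W. \<exists>e\<in>P. ks e \<inter> W = {i}"
  shows "card V \<le> card P"
proof -
  have "card V \<le> card {e\<in>P. ks e \<inter> V \<noteq> {}}"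
    using fV
  proof (induction V rule: finite_remove_induct)
    case empty then show ?case by simp
  next
    case (remove W)
    obtain i e where i: "i \<in> W" and e: "e \<in> P" "ks e \<inter> W = {i}" using H[OF remove(3) remove(2)] by blast
    have sub: "{e\<in>P. ks e \<inter> (W - {i}) \<noteq> {}} \<subseteq> {e\<in>P. ks e \<inter> W \<noteq> {}} - {e}"
      using e by auto
    have fin: "finite {e\<in>P. ks e \<inter> W \<noteq> {}}" using fP by simp
    have eIn: "e \<in> {e\<in>P. ks e \<inter> W \<noteq> {}}" using e by auto
    have c1: "card (W - {i}) = card W - 1" using i by (rule card_Diff_singleton)
    have c2: "card W > 0" using i remove(1) card_gt_0_iff by blast
    have "card W = card (W - {i}) + 1" using c1 c2 by linarith
    also have "\<dots> \<le> card {e\<in>P. ks e \<inter> (W - {i}) \<noteq> {}} + 1" using remove.IH[OF i] by simp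
    also have "\<dots> \<le> card ({e\<in>P. ks e \<inter> W \<noteq> {}} - {e}) + 1"
      using card_mono[OF _ sub] fin by (simp only: finite_Diff add_le_cancel_right)
    also have "\<dots> = card {e\<in>P. ks e \<inter> W \<noteq> {}}"
    proof -
      have d1: "card ({e\<in>P. ks e \<inter> W \<noteq> {}} - {e}) = card {e\<in>P. ks e \<inter> W \<noteq> {}} - 1"
        using eIn by (rule card_Diff_singleton)
      have d2: "card {e\<in>P. ks e \<inter> W \<noteq> {}} > 0" using fin eIn card_gt_0_iff by blast
      show ?thesis using d1 d2 by linarith
    qed
    finally show ?case .
  qed
  also have "\<dots> \<le> card P" using fP by (intro card_mono) auto
  finally show ?thesis .
qed


lemma xv_plus_eq: "xv i = xv k + c \<Longrightarrow> c = 0"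
proof -
  assume h: "xv i = xv k + c"
  have l: "\<And>j. Poly_Mapping.lookup (xv i) j = Poly_Mapping.lookup (xv k) j + Poly_Mapping.lookup c j"
    using h by (metis lookup_add)
  have "k = i" using l[of k] by (auto simp: lookup_single when_def split: if_splits)
  then have "\<And>j. Poly_Mapping.lookup c j = 0" using l by simp
  then show "c = 0" by (intro poly_mapping_eqI) simp
qed

lemma not_in_fI:
  fixes j w :: "'a::field mpoly"
  assumes nA: "\<forall>b\<in>A. \<forall>i. \<not> mle b (xv i)"
    and j: "j \<in> mset_ideal n A" and w: "w \<in> mset_ideal n (xv ` V)"
  shows "Poly_Mapping.single (xv i) 1 \<noteq> j + fsum n * w"
proof
  assume h: "Poly_Mapping.single (xv i) 1 = j + fsum n * w"
  have lj: "Poly_Mapping.lookup j (xv i) = 0"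
  proof (rule ccontr)
    assume "Poly_Mapping.lookup j (xv i) \<noteq> 0"
    then have "xv i \<in> Poly_Mapping.keys j" by (simp add: in_keys_iff)
    then show False using j nA unfolding mset_ideal_def by blast
  qed
  have "xv i \<notin> Poly_Mapping.keys (fsum n * w)"
  proof
    assume "xv i \<in> Poly_Mapping.keys (fsum n * w)"
    then obtain a c where ac: "xv i = a + c" "a \<in> Poly_Mapping.keys (fsum n :: 'a mpoly)" "c \<in> Poly_Mapping.keys w"
      using keys_mult[of "fsum n" w] by blast
    from ac(2) obtain k where "a = xv k" unfolding fsum_def
      using keys_sum[of "\<lambda>k. Poly_Mapping.single (xv k) (1::'a)" "{..<n}"] by (auto split: if_splits)
    then have "c = 0" using ac(1) xv_plus_eq by blast
    then show False using ac(3) I_nz[OF w] by simp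
  qed
  then have "Poly_Mapping.lookup (fsum n * w) (xv i) = 0" by (simp add: in_keys_iff)
  then have "Poly_Mapping.lookup (j + fsum n * w) (xv i) = 0" using lj by (simp add: lookup_add)
  then show False unfolding h[symmetric] by simp
qed

lemma mdeg_le1:
  assumes "mle b (xv i)" "\<forall>j. Poly_Mapping.lookup b j \<le> 1"
  shows "mdeg b \<le> 1"
proof -
  have "Poly_Mapping.keys b \<subseteq> {i}"
  proof
    fix j assume "j \<in> Poly_Mapping.keys b"
    then have "Poly_Mapping.lookup b j \<noteq> 0" by (simp add: in_keys_iff)
    then show "j \<in> {i}" using assms(1) unfolding mle_def
      by (metis le_zero_eq lookup_single_not_eq singletonI)
  qed
  then have "Poly_Mapping.keys b = {} \<or> Poly_Mapping.keys b = {i}" by blast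
  then show ?thesis unfolding mdeg_def using assms(2) by auto
qed



lemma sqfree_finite: "finite {a. sqfree_mon n a}"
proof (rule inj_on_finite[of Poly_Mapping.keys _ "Pow {..<n}"])
  show "inj_on Poly_Mapping.keys {a. sqfree_mon n a}"
  proof
    fix a b assume a: "a \<in> {a. sqfree_mon n a}" and b: "b \<in> {a. sqfree_mon n a}"
      and k: "Poly_Mapping.keys a = Poly_Mapping.keys b"
    show "a = b"
    proof (rule poly_mapping_eqI)
      fix j
      have "Poly_Mapping.lookup a j \<le> 1" "Poly_Mapping.lookup b j \<le> 1"
        using a b unfolding sqfree_mon_def by auto
      moreover have "(Poly_Mapping.lookup a j = 0) = (Poly_Mapping.lookup b j = 0)"
        using k by (metis in_keys_iff)
      ultimately show "Poly_Mapping.lookup a j = Poly_Mapping.lookup b j" by linarith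
    qed
  qed
  show "Poly_Mapping.keys ` {a. sqfree_mon n a} \<subseteq> Pow {..<n}"
    unfolding sqfree_mon_def by auto
qed auto

theorem proposition1p14:
  fixes n r :: nat and I J :: "('a::field) mpoly set" and V :: "nat set" and A :: "(nat \<Rightarrow>\<^sub>0 nat) set"
  assumes "V \<subseteq> {..<n}" and "card V = r" and "r > 0"
    and "I = ideal_gen n (var ` V)"
    and "\<forall>a\<in>A. sqfree_mon n a \<and> mdeg a \<ge> 2"
    and "J = ideal_gen n (mon ` A)"
    and "J \<noteq> {0}" and "J \<subset> I"
    and "r > rho n 2 I - rho n 2 J"
  shows "depth_quot n I J = 1"
proof -
  note Vn = assms(1)
  have fV: "finite V" using Vn finite_subset by blast
  have Vne: "V \<noteq> {}" using assms(2,3) by auto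
  have "var ` V = (mon ` (xv ` V) :: 'a mpoly set)" unfolding var_def by auto
  moreover have "ideal_gen n (mon ` (xv ` V)) = (mset_ideal n (xv ` V) :: 'a mpoly set)"
    by (rule ideal_gen_mon) (use Vn in auto)
  ultimately have Ich: "I = mset_ideal n (xv ` V)" using assms(4) by simp
  have Jch: "J = mset_ideal n A" using assms(6,5) ideal_gen_mon[of A n]
    unfolding sqfree_mon_def by auto
  have sq: "\<forall>b\<in>A. \<forall>j. Poly_Mapping.lookup b j \<le> 1" using assms(5) unfolding sqfree_mon_def by auto
  have nA: "\<forall>b\<in>A. \<forall>i. \<not> mle b (xv i)"
    using mdeg_le1 sq assms(5) by fastforce
  have J_I: "J \<subseteq> I" using assms(8) by blast
  have zI: "0 \<in> I" unfolding Ich using mset_ideal_is_ideal unfolding is_ideal_def by blast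
  have "\<exists>C. C \<noteq> {} \<and> C \<subseteq> V \<and> (\<forall>i\<in>C. \<forall>k<n. k \<notin> C \<longrightarrow> (\<exists>b\<in>A. mle b (xv i + xv k)))"
  proof (rule ccontr)
    assume nC: "\<not> ?thesis"
    define PI where "PI = {a. sqfree_mon n a \<and> mdeg a = 2 \<and> mon a \<in> I}"
    define PJ where "PJ = {a. sqfree_mon n a \<and> mdeg a = 2 \<and> mon a \<in> J}"
    have fPI: "finite PI" unfolding PI_def by (rule finite_subset[OF _ sqfree_finite[of n]]) auto
    have PJI: "PJ \<subseteq> PI" unfolding PI_def PJ_def using J_I by auto
    have "card V \<le> card (PI - PJ)"
    proof (rule count_lemma[where ks = Poly_Mapping.keys])
      show "finite (PI - PJ)" using fPI by simp
      show "finite V" by (rule fV)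
      fix W assume W: "W \<subseteq> V" "W \<noteq> {}"
      then obtain i k where ik: "i \<in> W" "k < n" "k \<notin> W" "\<not> (\<exists>b\<in>A. mle b (xv i + xv k))"
        using nC by blast
      define e where "e = xv i + xv k"
      have "i \<noteq> k" using ik by blast
      have "i < n" using ik W Vn by blast
      have ke: "Poly_Mapping.keys e = {i, k}" unfolding e_def using \<open>i \<noteq> k\<close>
        by (auto simp: in_keys_iff lookup_add lookup_single when_def split: if_splits)
      have sqe: "sqfree_mon n e" unfolding sqfree_mon_def using ke \<open>i < n\<close> ik(2) \<open>i \<noteq> k\<close>
        by (auto simp: e_def lookup_add lookup_single when_def)
      have de: "mdeg e = 2" unfolding mdeg_def ke using \<open>i \<noteq> k\<close>
        by (simp add: e_def lookup_add lookup_single)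
      have monP: "mon e \<in> polyring n" unfolding mon_def using ke \<open>i < n\<close> ik(2)
        by (intro polyring_single) auto
      have "mon e \<in> I" unfolding Ich I_char using monP ke ik(1) W by (auto simp: mon_def)
      moreover have "mon e \<notin> J" unfolding Jch mset_ideal_def using ik(4) by (auto simp: mon_def e_def)
      ultimately have "e \<in> PI - PJ" unfolding PI_def PJ_def using sqe de by auto
      moreover have "Poly_Mapping.keys e \<inter> W = {i}" using ke ik by auto
      ultimately show "\<exists>i\<in>W. \<exists>e\<in>PI - PJ. Poly_Mapping.keys e \<inter> W = {i}" using ik(1) by blast
    qed
    also have "\<dots> = card PI - card PJ" using PJI fPI by (meson card_Diff_subset finite_subset)
    also have "\<dots> = rho n 2 I - rho n 2 J" unfolding rho_def PI_def PJ_def ..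
    finally show False using assms(2,9) by simp
  qed
  then obtain C where C: "C \<noteq> {}" "C \<subseteq> V"
    and hC: "\<forall>i\<in>C. \<forall>k<n. k \<notin> C \<longrightarrow> (\<exists>b\<in>A. mle b (xv i + xv k))" by blast
  have reg1: "regular_seq n I J [fsum n]"
    unfolding regular_seq_def
  proof (intro conjI allI impI ballI)
    show "set [fsum n] \<subseteq> max_ideal n" using fsum_max by simp
  next
    fix i u assume "i < length [fsum n :: 'a mpoly]" "u \<in> I"
      "[fsum n] ! i * u \<in> sub_seq I J (take i [fsum n])"
    then show "u \<in> sub_seq I J (take i [fsum n])"
      using fsum_regular[OF sq, of u n V] sub_seq_Nil[OF zI] Ich Jch by auto
  next
    obtain i where i: "i \<in> V" using Vne by blast
    have "Poly_Mapping.single (xv i) (1::'a) \<in> polyring n" using i Vn by (intro polyring_single) auto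
    then have XI: "Poly_Mapping.single (xv i) 1 \<in> I" unfolding Ich I_char using i by auto
    have "Poly_Mapping.single (xv i) 1 \<notin> sub_seq I J [fsum n]"
      unfolding sub_seq_1 using not_in_fI[OF nA] Ich Jch by blast
    then show "sub_seq I J [fsum n] \<noteq> I" using XI by blast
  qed
  have bound: "length fs \<le> 1" if "regular_seq n I J fs" for fs
  proof (rule ccontr)
    assume "\<not> length fs \<le> 1"
    then have l: "length fs \<ge> 2" by simp
    have f01: "fs ! 0 \<in> max_ideal n" "fs ! 1 \<in> max_ideal n"
    proof -
      have "set fs \<subseteq> max_ideal n" using that unfolding regular_seq_def by blast
      moreover have "fs ! 0 \<in> set fs" "fs ! 1 \<in> set fs" using l by (auto intro: nth_mem)
      ultimately show "fs ! 0 \<in> max_ideal n" "fs ! 1 \<in> max_ideal n" by blast+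
    qed
    have all: "\<forall>i<length fs. \<forall>u\<in>I. fs ! i * u \<in> sub_seq I J (take i fs) \<longrightarrow> u \<in> sub_seq I J (take i fs)"
      using that unfolding regular_seq_def by blast
    have "0 < length fs" "1 < length fs" using l by auto
    then have c0: "\<forall>u\<in>I. fs ! 0 * u \<in> sub_seq I J (take 0 fs) \<longrightarrow> u \<in> sub_seq I J (take 0 fs)"
      and c1: "\<forall>u\<in>I. fs ! 1 * u \<in> sub_seq I J (take 1 fs) \<longrightarrow> u \<in> sub_seq I J (take 1 fs)"
      using all by blast+
    have t1: "take 1 fs = [fs ! 0]" using l by (cases fs) auto
    have reg0: "\<forall>u\<in>mset_ideal n (xv ` V). fs ! 0 * u \<in> mset_ideal n A \<longrightarrow> u \<in> mset_ideal n A"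
      using c0 sub_seq_Nil[OF zI] Ich Jch by simp
    obtain u where "u \<in> mset_ideal n (xv ` V)"
      "fs ! 1 * u \<in> sub_seq (mset_ideal n (xv ` V)) (mset_ideal n A) [fs ! 0]"
      "u \<notin> sub_seq (mset_ideal n (xv ` V)) (mset_ideal n A) [fs ! 0]"
      using no_two[OF nA C Vn hC f01 reg0] by blast
    then show False using c1 t1 Ich Jch by simp
  qed
  show ?thesis unfolding depth_quot_def
  proof (rule Greatest_equality)
    show "\<exists>fs. length fs = 1 \<and> regular_seq n I J fs" using reg1 by (intro exI[of _ "[fsum n]"]) simp
    show "\<And>y. \<exists>fs. length fs = y \<and> regular_seq n I J fs \<Longrightarrow> y \<le> 1" using bound by blast
  qed
qed

end
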